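(* Let $X$ be a Hilbert space with orthonormal basis $(e_n)_{n\in\mathbb{N}}$ and let $(\lambda_n)_{n\in\mathbb{N}}\subset\{z\in\mathbb{C}:\Re z<0\}$ be such that $(\Re\lambda_n)$ is monotonically decreasing with $\lim_{n\to\infty}\Re\lambda_n=-\infty$ and $|\operatorname{Im}\lambda_n|\le k|\Re\lambda_n|$ for some $k>0$ and all $n$. Let $Ae_n=\lambda_ne_n$ with $D(A)=\{x=\sum_nx_ne_n:\sum_n|\lambda_nx_n|^2<\infty\}$. Let $U:=X$ and $B:=A_{-1}\in\mathcal{L}(U,X_{-1})$. Then: (i) for every $u\in U$, the operator $Bu\in\mathcal{L}(\mathbb{C},X_{-1})$, $z\mapsto zBu$, is $L^\infty$-admissible for $A$; (ii) $B$ is not $L^\infty$-admissible for $A$; (iii) $\sup_{\Re\lambda>0}\|R(\lambda,A_{-1})B\|_{\mathcal{L}(U,X)}<\infty$.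
   Context: $X_{-1}$ is the completion of $X$ w.r.t. $\|(\beta-A)^{-1}\cdot\|$, $\beta\in\rho(A)$; $A_{-1}$, $T_{-1}$ are the extensions of $A$ and its semigroup $T$ to $X_{-1}$; $R(\lambda,A_{-1})=(\lambda-A_{-1})^{-1}$. An operator $B\in\mathcal{L}(U,X_{-1})$ is $L^\infty$-admissible if for every $t>0$ the map $u\mapsto\int_0^tT_{-1}(s)Bu(s)ds$ sends $L^\infty(0,t;U)$ into $X$. *)

theory Defs
  imports "HOL-Analysis.Analysis"
begin

text \<open>Concrete model: X is identified (isometrically) with l2(nat) over the complex
numbers via the orthonormal basis (e_n); x corresponds to its coefficient sequence.
The diagonal operator A e_n = lam n e_n, its extension A_{-1}, the extrapolated
semigroup T_{-1}(s) (acting as multiplication by exp(s lam n)) and the resolvent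
R(mu, A_{-1}) (multiplication by 1/(mu - lam n)) all act coordinatewise.  Elements
of X_{-1} are represented by their coefficient sequences as well.\<close>

definition is_ell2 :: "(nat \<Rightarrow> complex) \<Rightarrow> bool" where
  "is_ell2 x \<longleftrightarrow> summable (\<lambda>n. (cmod (x n))\<^sup>2)"

definition ell2_norm :: "(nat \<Rightarrow> complex) \<Rightarrow> real" where
  "ell2_norm x = sqrt (\<Sum>n. (cmod (x n))\<^sup>2)"

text \<open>Representatives of elements of L^infty(0,t;U) for U = l2 (coordinatewise
measurable, which for separable l2 is equivalent to strong measurability, and
essentially bounded in l2-norm).\<close>
definition Linf_ell2 :: "real \<Rightarrow> (real \<Rightarrow> nat \<Rightarrow> complex) \<Rightarrow> bool" where
  "Linf_ell2 t u \<longleftrightarrow>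
     (\<forall>n. set_borel_measurable lborel {0..t} (\<lambda>s. u s n)) \<and>
     (\<exists>M. AE s in lborel. s \<in> {0..t} \<longrightarrow> is_ell2 (u s) \<and> ell2_norm (u s) \<le> M)"

definition Linf_scalar :: "real \<Rightarrow> (real \<Rightarrow> complex) \<Rightarrow> bool" where
  "Linf_scalar t v \<longleftrightarrow>
     set_borel_measurable lborel {0..t} v \<and> (\<exists>M. AE s in lborel. s \<in> {0..t} \<longrightarrow> cmod (v s) \<le> M)"

text \<open>Coefficients of the X_{-1}-valued integral  int_0^t T_{-1}(s) B u(s) ds, where the
control operator B : U \<rightarrow> X_{-1} is given by the coefficient map Bc.\<close>
definition ctrl_integral ::
  "(nat \<Rightarrow> complex) \<Rightarrow> ('u \<Rightarrow> nat \<Rightarrow> complex) \<Rightarrow> real \<Rightarrow> (real \<Rightarrow> 'u) \<Rightarrow> nat \<Rightarrow> complex" where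
  "ctrl_integral lam Bc t u n = (LINT s:{0..t}|lborel. exp (complex_of_real s * lam n) * Bc (u s) n)"

definition Linf_admissible ::
  "(nat \<Rightarrow> complex) \<Rightarrow> ('u \<Rightarrow> nat \<Rightarrow> complex) \<Rightarrow> (real \<Rightarrow> (real \<Rightarrow> 'u) \<Rightarrow> bool) \<Rightarrow> bool" where
  "Linf_admissible lam Bc Linf \<longleftrightarrow>
     (\<forall>t>0. \<forall>u. Linf t u \<longrightarrow> is_ell2 (ctrl_integral lam Bc t u))"

definition Bop :: "(nat \<Rightarrow> complex) \<Rightarrow> (nat \<Rightarrow> complex) \<Rightarrow> nat \<Rightarrow> complex" where
  "Bop lam x n = lam n * x n"

definition resolvent_m1 :: "(nat \<Rightarrow> complex) \<Rightarrow> complex \<Rightarrow> (nat \<Rightarrow> complex) \<Rightarrow> nat \<Rightarrow> complex" where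
  "resolvent_m1 lam mu y n = y n / (mu - lam n)"

end

theory Submission
  imports Defs
begin


lemma exp_int_bound:
  fixes r t :: real assumes r: "r > 0" and t: "0 \<le> t"
  shows "(LINT s:{0..t}|lborel. exp (- (r * s))) \<le> 1 / r"
proof -
  have "(LINT s:{0..t}|lborel. exp (- (r * s))) = (- exp (- (r * t)) / r) - (- exp (- (r * 0)) / r)"
    unfolding set_lebesgue_integral_def
  proof (rule integral_FTC_atLeastAtMost[OF t])
    show "continuous_on {0..t} (\<lambda>x. exp (- (r * x)))" by (intro continuous_intros)
    fix x show "((\<lambda>a. - exp (- (r * a)) / r) has_vector_derivative exp (- (r * x))) (at x within {0..t})"
      unfolding has_real_derivative_iff_has_vector_derivative[symmetric]
      using r by (auto intro!: derivative_eq_intros)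
  qed
  also have "\<dots> \<le> 1 / r" using r by (simp add: divide_simps)
  finally show ?thesis .
qed

lemma set_integrable_exp:
  fixes r t :: real
  shows "set_integrable lborel {0..t} (\<lambda>s. exp (- (r * s)))"
  by (intro borel_integrable_atLeastAtMost' continuous_intros)



lemma ell2_compare:
  fixes x y :: "nat \<Rightarrow> complex" and c :: real
  assumes x: "is_ell2 x" and c: "c \<ge> 0" and le: "\<And>n. cmod (y n) \<le> c * cmod (x n)"
  shows "is_ell2 y \<and> ell2_norm y \<le> c * ell2_norm x"
proof -
  have sx: "summable (\<lambda>n. (cmod (x n))\<^sup>2)" using x by (simp add: is_ell2_def)
  have le2: "(cmod (y n))\<^sup>2 \<le> c\<^sup>2 * (cmod (x n))\<^sup>2" for n
  proof -
    have "(cmod (y n))\<^sup>2 \<le> (c * cmod (x n))\<^sup>2" using le[of n] by (intro power_mono) auto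
    then show ?thesis by (simp add: power_mult_distrib)
  qed
  have sx2: "summable (\<lambda>n. c\<^sup>2 * (cmod (x n))\<^sup>2)" using sx by (rule summable_mult)
  have sy: "summable (\<lambda>n. (cmod (y n))\<^sup>2)"
    by (rule summable_comparison_test'[OF sx2, of 0]) (use le2 in auto)
  have "(\<Sum>n. (cmod (y n))\<^sup>2) \<le> (\<Sum>n. c\<^sup>2 * (cmod (x n))\<^sup>2)"
    by (rule suminf_le[OF le2 sy sx2])
  also have "\<dots> = c\<^sup>2 * (\<Sum>n. (cmod (x n))\<^sup>2)" using sx by (rule suminf_mult)
  finally have "sqrt (\<Sum>n. (cmod (y n))\<^sup>2) \<le> sqrt (c\<^sup>2 * (\<Sum>n. (cmod (x n))\<^sup>2))" by simp
  also have "\<dots> = c * sqrt (\<Sum>n. (cmod (x n))\<^sup>2)" using c by (simp add: real_sqrt_mult)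
  finally show ?thesis using sy by (simp add: is_ell2_def ell2_norm_def)
qed

lemma ratio_bound:
  fixes l mu :: complex and k :: real
  assumes "Re l < 0" "\<bar>Im l\<bar> \<le> k * \<bar>Re l\<bar>"
  shows "cmod l \<le> (1 + k) * \<bar>Re l\<bar>"
proof -
  have "cmod l \<le> \<bar>Re l\<bar> + \<bar>Im l\<bar>" by (rule cmod_le)
  then show ?thesis using assms by (simp add: algebra_simps)
qed

lemma single_ell2:
  fixes x :: "nat \<Rightarrow> complex"
  assumes "\<And>n. n \<noteq> m \<Longrightarrow> x n = 0" "cmod (x m) \<le> 1"
  shows "is_ell2 x \<and> ell2_norm x \<le> 1"
proof -
  have eq: "(\<lambda>n. (cmod (x n))\<^sup>2) = (\<lambda>n. if n = m then (cmod (x n))\<^sup>2 else 0)"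
    using assms(1) by auto
  have "(\<lambda>n. (cmod (x n))\<^sup>2) sums (cmod (x m))\<^sup>2" unfolding eq by (rule sums_single)
  moreover have "(cmod (x m))\<^sup>2 \<le> 1" using assms(2) by (simp add: power_le_one)
  ultimately show ?thesis using assms(2) by (auto simp: is_ell2_def ell2_norm_def sums_iff)
qed



lemma part3:
  fixes lam :: "nat \<Rightarrow> complex" and k :: real
  assumes neg: "\<forall>n. Re (lam n) < 0" and kpos: "k > 0"
    and sector: "\<forall>n. \<bar>Im (lam n)\<bar> \<le> k * \<bar>Re (lam n)\<bar>"
  shows "\<exists>C. \<forall>mu. Re mu > 0 \<longrightarrow>
              (\<forall>x. is_ell2 x \<longrightarrow> is_ell2 (resolvent_m1 lam mu (Bop lam x))
                     \<and> ell2_norm (resolvent_m1 lam mu (Bop lam x)) \<le> C * ell2_norm x)"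
proof (intro exI allI impI)
  fix mu :: complex and x assume mu: "Re mu > 0" and x: "is_ell2 x"
  show "is_ell2 (resolvent_m1 lam mu (Bop lam x)) \<and> ell2_norm (resolvent_m1 lam mu (Bop lam x)) \<le> (1 + k) * ell2_norm x"
  proof (rule ell2_compare[OF x])
    show "0 \<le> 1 + k" using kpos by simp
    fix n
    have l: "cmod (lam n) \<le> (1 + k) * \<bar>Re (lam n)\<bar>" using ratio_bound neg sector by blast
    have d: "\<bar>Re (lam n)\<bar> \<le> cmod (mu - lam n)"
    proof -
      have "\<bar>Re (lam n)\<bar> \<le> \<bar>Re (mu - lam n)\<bar>" using neg[rule_format, of n] mu by simp
      also have "\<dots> \<le> cmod (mu - lam n)" by (rule abs_Re_le_cmod)
      finally show ?thesis .
    qed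
    have pos: "\<bar>Re (lam n)\<bar> > 0" using neg[rule_format, of n] by simp
    have "cmod (resolvent_m1 lam mu (Bop lam x) n) = cmod (lam n) * cmod (x n) / cmod (mu - lam n)"
      by (simp add: resolvent_m1_def Bop_def norm_mult norm_divide)
    also have "\<dots> \<le> (1 + k) * \<bar>Re (lam n)\<bar> * cmod (x n) / \<bar>Re (lam n)\<bar>"
      by (intro frac_le mult_right_mono l d pos) (use kpos pos in auto)
    also have "\<dots> = (1 + k) * cmod (x n)" using pos by simp
    finally show "cmod (resolvent_m1 lam mu (Bop lam x) n) \<le> (1 + k) * cmod (x n)" .
  qed
qed



lemma part1:
  fixes lam :: "nat \<Rightarrow> complex" and k :: real
  assumes neg: "\<forall>n. Re (lam n) < 0" and kpos: "k > 0"
    and sector: "\<forall>n. \<bar>Im (lam n)\<bar> \<le> k * \<bar>Re (lam n)\<bar>"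
  shows "\<forall>u. is_ell2 u \<longrightarrow>
            Linf_admissible lam (\<lambda>(z::complex) n. z * Bop lam u n) Linf_scalar"
  unfolding Linf_admissible_def
proof (intro allI impI)
  fix u :: "nat \<Rightarrow> complex" and t :: real and v :: "real \<Rightarrow> complex"
  assume u: "is_ell2 u" and t: "t > 0" and v: "Linf_scalar t v"
  from v obtain M where M: "AE s in lborel. s \<in> {0..t} \<longrightarrow> cmod (v s) \<le> M"
    unfolding Linf_scalar_def by blast
  define M' where "M' = max M 0"
  have M'0: "M' \<ge> 0" by (simp add: M'_def)
  have M': "AE s in lborel. s \<in> {0..t} \<longrightarrow> cmod (v s) \<le> M'"
    using M by eventually_elim (auto simp: M'_def)
  show "is_ell2 (ctrl_integral lam (\<lambda>z n. z * Bop lam u n) t v)"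
  proof (rule conjunct1[OF ell2_compare[OF u, of "M' * (1 + k)"]])
    show "0 \<le> M' * (1 + k)" using M'0 kpos by simp
    fix n
    define r where "r = - Re (lam n)"
    have r: "r > 0" using neg by (simp add: r_def)
    define f where "f = (\<lambda>s::real. exp (complex_of_real s * lam n) * (v s * (lam n * u n)))"
    have "cmod (ctrl_integral lam (\<lambda>z n. z * Bop lam u n) t v n)
        = norm (integral\<^sup>L lborel (\<lambda>s. indicator {0..t} s *\<^sub>R f s))"
      by (simp add: ctrl_integral_def set_lebesgue_integral_def f_def Bop_def)
    also have "\<dots> \<le> integral\<^sup>L lborel (\<lambda>s. norm (indicator {0..t} s *\<^sub>R f s))"
      by (rule integral_norm_bound)
    also have "\<dots> \<le> integral\<^sup>L lborel (\<lambda>s. indicator {0..t} s *\<^sub>R (exp (- (r * s)) * (M' * cmod (lam n) * cmod (u n))))"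
    proof (rule integral_mono_AE')
      show "integrable lborel (\<lambda>s. indicator {0..t} s *\<^sub>R (exp (- (r * s)) * (M' * cmod (lam n) * cmod (u n))))"
        using set_integrable_mult_left[OF set_integrable_exp[of t r], of "M' * cmod (lam n) * cmod (u n)"]
        unfolding set_integrable_def by simp
      show "AE s in lborel. 0 \<le> indicator {0..t} s *\<^sub>R (exp (- (r * s)) * (M' * cmod (lam n) * cmod (u n)))"
        using M'0 by auto
      show "AE s in lborel. norm (indicator {0..t} s *\<^sub>R f s) \<le> indicator {0..t} s *\<^sub>R (exp (- (r * s)) * (M' * cmod (lam n) * cmod (u n)))"
        using M'
      proof eventually_elim
        case (elim s)
        show ?case
        proof (cases "s \<in> {0..t}")
          case True
          have "norm (f s) = exp (- (r * s)) * (cmod (v s) * (cmod (lam n) * cmod (u n)))"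
            by (simp add: f_def norm_mult r_def)
          also have "\<dots> \<le> exp (- (r * s)) * (M' * (cmod (lam n) * cmod (u n)))"
            using elim True by (intro mult_left_mono mult_right_mono) auto
          finally show ?thesis using True by (simp add: mult.assoc)
        qed auto
      qed
    qed
    also have "\<dots> = (M' * cmod (lam n) * cmod (u n)) * (LINT s:{0..t}|lborel. exp (- (r * s)))"
    proof -
      have "(\<lambda>s. indicator {0..t} s *\<^sub>R (exp (- (r * s)) * (M' * cmod (lam n) * cmod (u n))))
          = (\<lambda>s. (M' * cmod (lam n) * cmod (u n)) * (indicator {0..t} s *\<^sub>R exp (- (r * s))))"
        by (auto simp: fun_eq_iff)
      then show ?thesis unfolding set_lebesgue_integral_def by (simp only: integral_mult_right_zero)
    qed
    also have "\<dots> \<le> (M' * cmod (lam n) * cmod (u n)) * (1 / r)"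
      using exp_int_bound[OF r, of t] t M'0 by (intro mult_left_mono) auto
    also have "\<dots> = M' * cmod (u n) * (cmod (lam n) / r)" by simp
    also have "\<dots> \<le> M' * cmod (u n) * (1 + k)"
    proof (intro mult_left_mono)
      have "cmod (lam n) \<le> (1 + k) * r" proof -
        have "\<bar>Re (lam n)\<bar> = r" using neg[rule_format, of n] by (simp add: r_def)
        then show ?thesis using ratio_bound[of "lam n" k] neg sector by metis
      qed
      then show "cmod (lam n) / r \<le> 1 + k" using r by (simp add: divide_simps)
    qed (use M'0 in auto)
    finally show "cmod (ctrl_integral lam (\<lambda>z n. z * Bop lam u n) t v n) \<le> M' * (1 + k) * cmod (u n)"
      by (simp add: mult_ac)
  qed
qed



lemma part2:
  fixes lam :: "nat \<Rightarrow> complex"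
  assumes neg: "\<forall>n. Re (lam n) < 0"
    and lim: "filterlim (\<lambda>n. Re (lam n)) at_bot sequentially"
  shows "\<not> Linf_admissible lam (Bop lam) Linf_ell2"
proof
  assume adm: "Linf_admissible lam (Bop lam) Linf_ell2"
  define r where "r = (\<lambda>n. - Re (lam n))"
  have rpos: "r n > 0" for n using neg by (simp add: r_def)
  have big: "\<exists>n. m < n \<and> B \<le> r n" for m B
  proof -
    have "eventually (\<lambda>n. Re (lam n) \<le> - B) sequentially"
      using lim by (simp add: filterlim_at_bot)
    then obtain N where N: "\<And>n. n \<ge> N \<Longrightarrow> Re (lam n) \<le> - B"
      by (auto simp: eventually_sequentially)
    show ?thesis by (rule exI[of _ "max N (Suc m)"]) (use N[of "max N (Suc m)"] in \<open>auto simp: r_def\<close>)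
  qed
  obtain n0 where n0: "2 \<le> r n0" using big by blast
  define g where "g = rec_nat n0 (\<lambda>_ m. SOME n. m < n \<and> 4 * r m \<le> r n)"
  have g0: "g 0 = n0" by (simp add: g_def)
  have gS: "g j < g (Suc j) \<and> 4 * r (g j) \<le> r (g (Suc j))" for j
  proof -
    have "g (Suc j) = (SOME n. g j < n \<and> 4 * r (g j) \<le> r n)" by (simp add: g_def)
    then show ?thesis using someI_ex[OF big[of "g j" "4 * r (g j)"]] by simp
  qed
  have smg: "strict_mono g" using gS by (simp add: strict_mono_Suc_iff)
  have rg2: "2 \<le> r (g j)" for j
  proof (induction j)
    case 0 then show ?case using n0 g0 by simp
  next
    case (Suc j) then show ?case using gS[of j] by linarith
  qed
  have rgrow: "i < j \<Longrightarrow> 4 * r (g i) \<le> r (g j)" for i j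
  proof (induction j)
    case 0 then show ?case by simp
  next
    case (Suc j)
    show ?case
    proof (cases "i = j")
      case True then show ?thesis using gS[of j] by simp
    next
      case False
      then have "4 * r (g i) \<le> r (g j)" using Suc by simp
      then show ?thesis using gS[of j] rpos[of "g j"] by linarith
    qed
  qed
  define I where "I = (\<lambda>j. {1 / r (g j) .. 2 / r (g j)})"
  have Isub: "I j \<subseteq> {0..1}" for j
    using rg2[of j] rpos[of "g j"] by (auto simp: I_def divide_simps)
  have disj: "s \<in> I i \<Longrightarrow> s \<in> I j \<Longrightarrow> i = j" for s i j
  proof (rule ccontr)
    assume si: "s \<in> I i" and sj: "s \<in> I j" and ne: "i \<noteq> j"
    have *: "a < b \<Longrightarrow> s \<in> I a \<Longrightarrow> s \<in> I b \<Longrightarrow> False" for a b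
    proof -
      assume ab: "a < b" and sa: "s \<in> I a" and sb: "s \<in> I b"
      have ra: "r (g a) > 0" by (rule rpos)
      have rb: "4 * r (g a) \<le> r (g b)" using rgrow ab by blast
      have "s \<le> 2 / r (g b)" using sb by (simp add: I_def)
      also have "\<dots> \<le> 2 / (4 * r (g a))" using ra rb by (intro divide_left_mono) auto
      also have "\<dots> < 1 / r (g a)" using ra by (simp add: divide_simps)
      finally show False using sa by (simp add: I_def)
    qed
    show False using ne si sj *[of i j] *[of j i] by linarith
  qed
  define w where "w = (\<lambda>(s::real) n. exp (complex_of_real s * lam n) * lam n)"
  define u where "u = (\<lambda>s n. if \<exists>j. n = g j \<and> s \<in> I j then cnj (sgn (w s n)) else 0)"
  have ug: "u s (g j) = (if s \<in> I j then cnj (sgn (w s (g j))) else 0)" for s j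
    using strict_mono_eq[OF smg] unfolding u_def by auto
  have Linf: "Linf_ell2 1 u"
    unfolding Linf_ell2_def
  proof (intro conjI allI exI)
    fix n
    show "set_borel_measurable lborel {0..1} (\<lambda>s. u s n)"
    proof (cases "n \<in> range g")
      case True
      then obtain j where j: "n = g j" by blast
      have "(\<lambda>s. u s n) = (\<lambda>s. if s \<in> I j then cnj (sgn (w s (g j))) else 0)"
        using ug j by auto
      moreover have "(\<lambda>s. if s \<in> I j then cnj (sgn (w s (g j))) else 0) \<in> borel_measurable lborel"
      proof (rule measurable_If_set)
        have "(\<lambda>s::real. w s (g j)) \<in> borel_measurable borel"
          unfolding w_def by (intro borel_measurable_continuous_onI continuous_intros)
        then have m2: "(\<lambda>s::real. sgn (w s (g j))) \<in> borel_measurable borel"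
          using measurable_compose[OF _ borel_measurable_sgn] by blast
        have "continuous_on UNIV (\<lambda>z::complex. cnj z)" by (intro continuous_intros)
        then have "(\<lambda>z::complex. cnj z) \<in> borel_measurable borel" by (rule borel_measurable_continuous_onI)
        then have "(\<lambda>s::real. cnj (sgn (w s (g j)))) \<in> borel_measurable borel"
          using measurable_compose[OF m2] by blast
        then show "(\<lambda>s::real. cnj (sgn (w s (g j)))) \<in> borel_measurable lborel"
          by simp
        show "(\<lambda>s::real. 0::complex) \<in> borel_measurable lborel" by simp
        show "I j \<inter> space lborel \<in> sets lborel" unfolding I_def by simp
      qed
      ultimately have um: "(\<lambda>s. u s n) \<in> borel_measurable borel" by simp
      have "(\<lambda>s. indicator {0..1::real} s *\<^sub>R u s n) \<in> borel_measurable borel"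
        by (rule borel_measurable_scaleR[OF _ um]) simp
      then show ?thesis unfolding set_borel_measurable_def by simp
    next
      case False
      then have z: "\<And>s. u s n = 0" unfolding u_def by auto
      show ?thesis unfolding set_borel_measurable_def by (simp add: z)
    qed
  next
    show "AE s in lborel. s \<in> {0..1} \<longrightarrow> is_ell2 (u s) \<and> ell2_norm (u s) \<le> 1"
    proof (rule AE_I2, rule impI)
      fix s :: real
      show "is_ell2 (u s) \<and> ell2_norm (u s) \<le> 1"
      proof (cases "\<exists>j. s \<in> I j")
        case True
        then obtain j where j: "s \<in> I j" by blast
        show ?thesis
        proof (rule single_ell2[where m="g j"])
          fix n assume "n \<noteq> g j"
          then show "u s n = 0" using j disj unfolding u_def by auto
        next
          show "cmod (u s (g j)) \<le> 1" using ug[of s j] by (simp add: norm_sgn)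
        qed
      next
        case False
        show ?thesis
        proof (rule single_ell2[where m=0])
          fix n show "u s n = 0" using False unfolding u_def by auto
        next
          show "cmod (u s 0) \<le> 1" using False unfolding u_def by auto
        qed
      qed
    qed
  qed
  define c where "c = ctrl_integral lam (Bop lam) 1 u"
  have "is_ell2 c" using adm Linf unfolding Linf_admissible_def c_def by auto
  then have "(\<lambda>n. (cmod (c n))\<^sup>2) \<longlonglongrightarrow> 0" unfolding is_ell2_def by (rule summable_LIMSEQ_zero)
  from LIMSEQ_subseq_LIMSEQ[OF this smg]
  have lim0: "(\<lambda>j. (cmod (c (g j)))\<^sup>2) \<longlonglongrightarrow> 0" by (simp add: o_def)
  have lower: "exp (-2) \<le> cmod (c (g j))" for j
  proof -
    define n where "n = g j"
    have wcnj: "w s n * cnj (sgn (w s n)) = complex_of_real (cmod (w s n))" for s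
    proof (cases "w s n = 0")
      case False
      have "w s n * cnj (sgn (w s n)) = w s n * cnj (w s n) / complex_of_real (cmod (w s n))"
        by (simp add: sgn_div_norm divide_inverse scaleR_conv_of_real mult.commute)
      also have "\<dots> = complex_of_real ((cmod (w s n))\<^sup>2) / complex_of_real (cmod (w s n))"
        using complex_norm_square[of "w s n"] by simp
      also have "\<dots> = complex_of_real (cmod (w s n))" using False by (simp add: power2_eq_square)
      finally show ?thesis .
    qed simp
    have "c n = integral\<^sup>L lborel (\<lambda>s. complex_of_real (indicator (I j) s * cmod (w s n)))"
      unfolding c_def ctrl_integral_def set_lebesgue_integral_def
    proof (rule Bochner_Integration.integral_cong[OF refl])
      fix s
      have "exp (complex_of_real s * lam n) * Bop lam (u s) n = (if s \<in> I j then w s n * cnj (sgn (w s n)) else 0)"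
        using ug[of s j] by (simp add: Bop_def w_def n_def mult.assoc)
      then show "indicator {0..1} s *\<^sub>R (exp (complex_of_real s * lam n) * Bop lam (u s) n)
          = complex_of_real (indicator (I j) s * cmod (w s n))"
        using Isub[of j] wcnj[of s] by (auto simp: indicator_def)
    qed
    also have "\<dots> = complex_of_real (LINT s:I j|lborel. cmod (w s n))"
      unfolding set_lebesgue_integral_def real_scaleR_def by (rule integral_complex_of_real)
    finally have cn: "cmod (c n) = \<bar>LINT s:I j|lborel. cmod (w s n)\<bar>" by simp
    have rr: "r n > 0" by (rule rpos)
    have "(LINT s:I j|lborel. exp (-2) * r n) \<le> (LINT s:I j|lborel. cmod (w s n))"
    proof (rule set_integral_mono)
      show "set_integrable lborel (I j) (\<lambda>s. exp (-2) * r n)"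
        unfolding I_def by (intro borel_integrable_atLeastAtMost' continuous_intros)
      show "set_integrable lborel (I j) (\<lambda>s. cmod (w s n))"
        unfolding I_def w_def by (intro borel_integrable_atLeastAtMost' continuous_intros)
      fix s assume s: "s \<in> I j"
      then have s2: "s * r n \<le> 2" using rr by (simp add: I_def n_def divide_simps)
      have "cmod (w s n) = exp (- (s * r n)) * cmod (lam n)"
        by (simp add: w_def norm_mult r_def)
      moreover have "exp (-2) \<le> exp (- (s * r n))" using s2 by simp
      moreover have "r n \<le> cmod (lam n)" using abs_Re_le_cmod[of "lam n"] by (simp add: r_def)
      ultimately show "exp (-2) * r n \<le> cmod (w s n)"
        using rr by (simp add: mult_mono)
    qed
    moreover have "(LINT s:I j|lborel. exp (-2) * r n) = exp (-2)"
    proof -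
      have "(LINT s:I j|lborel. exp (-2) * r n) = measure lborel (I j) *\<^sub>R (exp (-2) * r n)"
        by (rule set_integral_const) (auto simp: I_def emeasure_lborel_Icc_eq)
      also have "measure lborel (I j) = 1 / r n"
        using rr by (simp add: I_def n_def divide_simps)
      finally show ?thesis using rr by simp
    qed
    ultimately show ?thesis using cn n_def by simp
  qed
  have "eventually (\<lambda>j. (cmod (c (g j)))\<^sup>2 < (exp (-2))\<^sup>2) sequentially"
    using lim0 by (rule order_tendstoD) simp
  then obtain j where "(cmod (c (g j)))\<^sup>2 < (exp (-2))\<^sup>2" by (auto simp: eventually_sequentially)
  moreover have "(exp (-2))\<^sup>2 \<le> (cmod (c (g j)))\<^sup>2" using lower[of j] by (intro power_mono) auto
  ultimately show False by simp
qed


theorem proposition14: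
  fixes lam :: "nat \<Rightarrow> complex" and k :: real
  assumes neg: "\<forall>n. Re (lam n) < 0"
    and mono: "decseq (\<lambda>n. Re (lam n))"
    and lim: "filterlim (\<lambda>n. Re (lam n)) at_bot sequentially"
    and kpos: "k > 0"
    and sector: "\<forall>n. \<bar>Im (lam n)\<bar> \<le> k * \<bar>Re (lam n)\<bar>"
  shows "(\<forall>u. is_ell2 u \<longrightarrow>
            Linf_admissible lam (\<lambda>(z::complex) n. z * Bop lam u n) Linf_scalar)
       \<and> \<not> Linf_admissible lam (Bop lam) Linf_ell2
       \<and> (\<exists>C. \<forall>mu. Re mu > 0 \<longrightarrow>
              (\<forall>x. is_ell2 x \<longrightarrow> is_ell2 (resolvent_m1 lam mu (Bop lam x))
                     \<and> ell2_norm (resolvent_m1 lam mu (Bop lam x)) \<le> C * ell2_norm x))"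
  using part1[OF neg kpos sector] part2[OF neg lim] part3[OF neg kpos sector] by blast

end
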